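(* Let $\mathbb M=(V,d)$ be a binary structure and $A\subseteq V$. Then $A$ is a robust module of $\mathbb M$ with at least two elements if and only if $A$ is a non-limit module of $\mathbb M$.
   Context: A binary structure over a set $W$ is a pair $\mathbb M=(V,d)$ with $d:V\times V\to W$. A module of $\mathbb M$ is a set $A\subseteq V$ such that $d(x,y)=d(x,y')$ and $d(y,x)=d(y',x)$ for all $x\in V\setminus A$ and $y,y'\in A$. A module is strong if for every module $B$, either $A\subseteq B$, $B\subseteq A$, or $A\cap B=\emptyset$. For $X\subseteq V$, $S_{\mathbb M}(X)$ is the intersection of all strong modules containing $X$. A module is robust if it is a singleton or equals $S_{\mathbb M}(\{x,y\})$ for some distinct $x,y\in V$. A module $I$ is non-limit if it is strong and contains a non-empty strong module $J\neq I$ which is maximal among the strong modules contained in $I$ and distinct from $I$. *)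

theory Defs
  imports Main
begin

text \<open>A binary structure over W is a pair (V, d) with d : V x V -> W; we represent it
  by a carrier set V :: 'a set and a function d :: 'a => 'a => 'w (only its values on
  V x V matter).\<close>

definition is_module :: "'a set \<Rightarrow> ('a \<Rightarrow> 'a \<Rightarrow> 'w) \<Rightarrow> 'a set \<Rightarrow> bool" where
  "is_module V d A \<longleftrightarrow> A \<subseteq> V \<and>
     (\<forall>x \<in> V - A. \<forall>y \<in> A. \<forall>y' \<in> A. d x y = d x y' \<and> d y x = d y' x)"

definition strong_module :: "'a set \<Rightarrow> ('a \<Rightarrow> 'a \<Rightarrow> 'w) \<Rightarrow> 'a set \<Rightarrow> bool" where
  "strong_module V d A \<longleftrightarrow> is_module V d A \<and>
     (\<forall>B. is_module V d B \<longrightarrow> A \<subseteq> B \<or> B \<subseteq> A \<or> A \<inter> B = {})"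

definition S_hull :: "'a set \<Rightarrow> ('a \<Rightarrow> 'a \<Rightarrow> 'w) \<Rightarrow> 'a set \<Rightarrow> 'a set" where
  "S_hull V d X = \<Inter> {B. strong_module V d B \<and> X \<subseteq> B}"

definition robust_module :: "'a set \<Rightarrow> ('a \<Rightarrow> 'a \<Rightarrow> 'w) \<Rightarrow> 'a set \<Rightarrow> bool" where
  "robust_module V d A \<longleftrightarrow> is_module V d A \<and>
     ((\<exists>x. A = {x}) \<or> (\<exists>x \<in> V. \<exists>y \<in> V. x \<noteq> y \<and> A = S_hull V d {x, y}))"

definition non_limit_module :: "'a set \<Rightarrow> ('a \<Rightarrow> 'a \<Rightarrow> 'w) \<Rightarrow> 'a set \<Rightarrow> bool" where
  "non_limit_module V d I \<longleftrightarrow> strong_module V d I \<and>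
     (\<exists>J. J \<noteq> {} \<and> strong_module V d J \<and> J \<subseteq> I \<and> J \<noteq> I \<and>
        (\<forall>K. strong_module V d K \<and> K \<subseteq> I \<and> K \<noteq> I \<and> J \<subseteq> K \<longrightarrow> K = J))"

end

theory Submission
  imports Defs
begin

lemma inter_module:
  assumes "F \<noteq> {}" "\<And>M. M \<in> F \<Longrightarrow> is_module V d M"
  shows "is_module V d (\<Inter>F)"
  unfolding is_module_def
proof (rule conjI[rotated], intro ballI)
  obtain M where "M \<in> F" using assms(1) by blast
  then show "\<Inter>F \<subseteq> V" using assms(2) unfolding is_module_def by blast
next
  fix x y y' assume x: "x \<in> V - \<Inter>F" and y: "y \<in> \<Inter>F" and y': "y' \<in> \<Inter>F"
  then obtain M where M: "M \<in> F" "x \<notin> M" by blast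
  then have "x \<in> V - M" "y \<in> M" "y' \<in> M" using x y y' by auto
  then show "d x y = d x y' \<and> d y x = d y' x"
    using assms(2)[OF M(1)] unfolding is_module_def by blast
qed

lemma inter_strong:
  assumes "F \<noteq> {}" "\<And>M. M \<in> F \<Longrightarrow> strong_module V d M"
  shows "strong_module V d (\<Inter>F)"
proof -
  have "is_module V d (\<Inter>F)"
    using inter_module[OF assms(1)] assms(2) unfolding strong_module_def by blast
  moreover have "\<Inter>F \<subseteq> B \<or> B \<subseteq> \<Inter>F \<or> \<Inter>F \<inter> B = {}" if B: "is_module V d B" for B
  proof (cases "\<Inter>F \<inter> B = {} \<or> B \<subseteq> \<Inter>F")
    case True then show ?thesis by blast
  next
    case False
    then obtain b M where M: "M \<in> F" "b \<in> B" "b \<notin> M" by blast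
    have "M \<subseteq> B \<or> B \<subseteq> M \<or> M \<inter> B = {}"
      using assms(2)[OF M(1)] B unfolding strong_module_def by blast
    moreover have "M \<inter> B \<noteq> {}" using False M(1) by blast
    ultimately have "M \<subseteq> B" using M by blast
    then show ?thesis using M(1) by blast
  qed
  ultimately show ?thesis unfolding strong_module_def by blast
qed

lemma union_chain_strong:
  assumes "\<And>M. M \<in> F \<Longrightarrow> strong_module V d M"
    and chain: "\<And>M N. M \<in> F \<Longrightarrow> N \<in> F \<Longrightarrow> M \<subseteq> N \<or> N \<subseteq> M"
  shows "strong_module V d (\<Union>F)"
proof -
  have mod: "is_module V d (\<Union>F)"
    unfolding is_module_def
  proof (rule conjI[rotated], intro ballI)
    show "\<Union>F \<subseteq> V" using assms(1) unfolding strong_module_def is_module_def by blast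
  next
    fix x y y' assume x: "x \<in> V - \<Union>F" and y: "y \<in> \<Union>F" and y': "y' \<in> \<Union>F"
    then obtain M N where MN: "M \<in> F" "N \<in> F" "y \<in> M" "y' \<in> N" by blast
    then obtain L where L: "L \<in> F" "y \<in> L" "y' \<in> L" using chain[OF MN(1,2)] by blast
    have "x \<in> V - L" using x L by blast
    then show "d x y = d x y' \<and> d y x = d y' x"
      using assms(1)[OF L(1)] L unfolding strong_module_def is_module_def by blast
  qed
  moreover have "\<Union>F \<subseteq> B \<or> B \<subseteq> \<Union>F \<or> \<Union>F \<inter> B = {}" if B: "is_module V d B" for B
  proof (cases "\<Union>F \<inter> B = {} \<or> \<Union>F \<subseteq> B")
    case True then show ?thesis by blast
  next
    case False
    then obtain M N where MN: "M \<in> F" "N \<in> F" "\<not> M \<subseteq> B" "N \<inter> B \<noteq> {}" by blast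
    then obtain L where L: "L \<in> F" "\<not> L \<subseteq> B" "L \<inter> B \<noteq> {}" using chain[OF MN(1,2)] by blast
    have "B \<subseteq> L" using assms(1)[OF L(1)] B L unfolding strong_module_def by blast
    then show ?thesis using L(1) by blast
  qed
  ultimately show ?thesis unfolding strong_module_def by blast
qed

lemma singleton_strong:
  assumes "x \<in> V" shows "strong_module V d {x}"
  using assms unfolding strong_module_def is_module_def by blast

lemma hull_strong:
  assumes "X \<subseteq> V" shows "strong_module V d (S_hull V d X)"
proof -
  have "strong_module V d V" unfolding strong_module_def is_module_def by blast
  then have "{B. strong_module V d B \<and> X \<subseteq> B} \<noteq> {}" using assms by blast
  then show ?thesis unfolding S_hull_def by (rule inter_strong) blast
qed

theorem proposition6p5:
  fixes V :: "'a set" and d :: "'a \<Rightarrow> 'a \<Rightarrow> 'w" and A :: "'a set"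
  assumes "A \<subseteq> V"
  shows "(robust_module V d A \<and> (\<exists>x \<in> A. \<exists>y \<in> A. x \<noteq> y)) \<longleftrightarrow> non_limit_module V d A"
proof
  assume h: "robust_module V d A \<and> (\<exists>x \<in> A. \<exists>y \<in> A. x \<noteq> y)"
  then obtain x y where xy: "x \<in> V" "y \<in> V" "x \<noteq> y" "A = S_hull V d {x, y}"
    unfolding robust_module_def by blast
  have As: "strong_module V d A" using hull_strong[of "{x,y}" V d] xy by simp
  have xyA: "x \<in> A" "y \<in> A" using xy(4) unfolding S_hull_def by auto
  have small: "A \<subseteq> K" if "strong_module V d K" "x \<in> K" "y \<in> K" for K
    using that xy(4) unfolding S_hull_def by blast
  define F where "F = {K. strong_module V d K \<and> K \<subseteq> A \<and> K \<noteq> A \<and> x \<in> K}"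
  define J where "J = \<Union>F"
  have Fy: "y \<notin> K" if "K \<in> F" for K using that small unfolding F_def by blast
  have Js: "strong_module V d J" unfolding J_def
  proof (rule union_chain_strong)
    show "strong_module V d M" if "M \<in> F" for M using that unfolding F_def by blast
    show "M \<subseteq> N \<or> N \<subseteq> M" if "M \<in> F" "N \<in> F" for M N
      using that unfolding F_def strong_module_def by blast
  qed
  have xF: "{x} \<in> F" unfolding F_def using singleton_strong[OF xy(1)] xyA xy(3) by blast
  have J1: "J \<subseteq> A" unfolding J_def F_def by blast
  have J3: "x \<in> J" using xF unfolding J_def by blast
  have J2: "J \<noteq> A" using Fy xyA(2) unfolding J_def by blast
  have JA: "J \<subseteq> A" "J \<noteq> A" "x \<in> J" "J \<noteq> {}" using J1 J2 J3 by auto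
  have "\<forall>K. strong_module V d K \<and> K \<subseteq> A \<and> K \<noteq> A \<and> J \<subseteq> K \<longrightarrow> K = J"
  proof (intro allI impI)
    fix K assume K: "strong_module V d K \<and> K \<subseteq> A \<and> K \<noteq> A \<and> J \<subseteq> K"
    then have "K \<in> F" using JA unfolding F_def by blast
    then have "K \<subseteq> J" unfolding J_def by blast
    then show "K = J" using K by blast
  qed
  note maxJ = this
  show "non_limit_module V d A" unfolding non_limit_module_def
    apply (rule conjI[OF As])
    apply (rule exI[of _ J])
    using Js JA(1,2,4) maxJ by (intro conjI) assumption+
next
  assume nl: "non_limit_module V d A"
  have As: "strong_module V d A" using nl unfolding non_limit_module_def by (rule conjunct1)
  obtain J where J: "J \<noteq> {}" "strong_module V d J" "J \<subseteq> A" "J \<noteq> A"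
    and max0: "\<forall>K. strong_module V d K \<and> K \<subseteq> A \<and> K \<noteq> A \<and> J \<subseteq> K \<longrightarrow> K = J"
    using nl unfolding non_limit_module_def by (elim conjE exE) (rule that)
  have max: "\<And>K. strong_module V d K \<Longrightarrow> K \<subseteq> A \<Longrightarrow> K \<noteq> A \<Longrightarrow> J \<subseteq> K \<Longrightarrow> K = J"
    using max0 by blast
  obtain x where x: "x \<in> J" using J(1) by blast
  obtain y where y: "y \<in> A" "y \<notin> J" using J(3,4) by blast
  have xyV: "x \<in> V" "y \<in> V" using x y J(3) assms by auto
  define S where "S = S_hull V d {x, y}"
  have Ss: "strong_module V d S" unfolding S_def using hull_strong[of "{x,y}" V d] xyV by simp
  have xyS: "x \<in> S" "y \<in> S" unfolding S_def S_hull_def by auto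
  have SA: "S \<subseteq> A" unfolding S_def S_hull_def using As x y J(3) by blast
  have "S = A"
  proof (rule ccontr)
    assume ne: "S \<noteq> A"
    have "J \<subseteq> S \<or> S \<subseteq> J \<or> J \<inter> S = {}"
      using J(2) Ss unfolding strong_module_def by blast
    then have "J \<subseteq> S" using x y xyS by blast
    then have "S = J" using max[OF Ss SA ne] by blast
    then show False using y xyS by blast
  qed
  then have "robust_module V d A"
  proof -
    have "is_module V d A" using As unfolding strong_module_def by simp
    moreover have "x \<noteq> y" using x y by blast
    ultimately show ?thesis unfolding robust_module_def using xyV \<open>S = A\<close> S_def by blast
  qed
  moreover have "x \<in> A" "x \<noteq> y" using x y J(3) by auto
  ultimately show "robust_module V d A \<and> (\<exists>x \<in> A. \<exists>y \<in> A. x \<noteq> y)"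
    using y(1) by blast
qed

end
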